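(* Let $\omega\subset\mathbb{R}^2$ be a smooth, bounded, connected open set and $h:\omega\to(0,\infty)$ a positive, bounded $C^1$ function. For $\varepsilon>0$ let $\Omega^\varepsilon=\{(x',x_3)\in\mathbb{R}^2\times\mathbb{R}: x'\in\omega,\ 0<x_3<\varepsilon h(x')\}$ and $\Omega=\{(z',z_3): z'\in\omega,\ 0<z_3<h(z')\}$. There is a constant $C>0$ independent of $\varepsilon$ such that for all $\varphi\in H^1_0(\Omega^\varepsilon)^3$, $$\|\varphi\|_{L^4(\Omega^\varepsilon)^3}\leq C\varepsilon^{1/4}\|D\varphi\|_{L^2(\Omega^\varepsilon)^{3\times3}},$$ and, writing $\widetilde\varphi(z)=\varphi(z',\varepsilon z_3)$ for $z\in\Omega$, $$\|\widetilde\varphi\|_{L^4(\Omega)^3}\leq C\varepsilon^{1/2}\|D_\varepsilon\widetilde\varphi\|_{L^2(\Omega)^{3\times3}}.$$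
   Context: $D\varphi$ denotes the gradient matrix $(D\varphi)_{ij}=\partial_{x_j}\varphi_i$. For a function $\widetilde\varphi$ on $\Omega$, $D_\varepsilon\widetilde\varphi$ is the $3\times3$ matrix with $(D_\varepsilon\widetilde\varphi)_{ij}=\partial_{z_j}\widetilde\varphi_i$ for $j=1,2$ and $(D_\varepsilon\widetilde\varphi)_{i3}=\varepsilon^{-1}\partial_{z_3}\widetilde\varphi_i$, $i=1,2,3$. *)

theory Defs
  imports "HOL-Analysis.Analysis"
begin

definition proj12 :: "real^3 \<Rightarrow> real^2" where
  "proj12 x = (\<chi> i. if i = 1 then x $ 1 else x $ 2)"

definition pt3 :: "real^2 \<Rightarrow> real \<Rightarrow> real^3" where
  "pt3 y t = (\<chi> i. if i = 1 then y $ 1 else if i = 2 then y $ 2 else t)"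

definition pd :: "'n::finite \<Rightarrow> (real^'n \<Rightarrow> 'b::real_normed_vector) \<Rightarrow> real^'n \<Rightarrow> 'b" where
  "pd j f x = frechet_derivative f (at x) (axis j 1)"

fun iter_pd :: "'n::finite list \<Rightarrow> (real^'n \<Rightarrow> real) \<Rightarrow> real^'n \<Rightarrow> real" where
  "iter_pd [] f = f"
| "iter_pd (j # js) f = pd j (iter_pd js f)"

definition smooth_fun :: "(real^'n::finite \<Rightarrow> real) \<Rightarrow> bool" where
  "smooth_fun f \<longleftrightarrow> (\<forall>js. (\<forall>x. iter_pd js f differentiable (at x)) \<and> continuous_on UNIV (iter_pd js f))"

(* bounded open set with smooth (C^infinity) boundary, via a global defining function *)
definition smooth_bounded_domain :: "(real^2) set \<Rightarrow> bool" where
  "smooth_bounded_domain w \<longleftrightarrow> open w \<and> bounded w \<and>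
     (\<exists>\<rho>. smooth_fun \<rho> \<and> w = {x. \<rho> x < 0} \<and>
        (\<forall>x\<in>frontier w. \<exists>j. pd j \<rho> x \<noteq> 0))"

definition C1_on :: "(real^'n::finite \<Rightarrow> real) \<Rightarrow> (real^'n) set \<Rightarrow> bool" where
  "C1_on f S \<longleftrightarrow> (\<forall>x\<in>S. f differentiable (at x)) \<and> (\<forall>j. continuous_on S (pd j f))"

definition grad3 :: "(real^3 \<Rightarrow> real^3) \<Rightarrow> real^3 \<Rightarrow> real^3^3" where
  "grad3 f x = (\<chi> i j. pd j f x $ i)"

definition C1c :: "(real^3) set \<Rightarrow> (real^3 \<Rightarrow> real^3) \<Rightarrow> bool" where
  "C1c U f \<longleftrightarrow> (\<forall>x. f differentiable (at x)) \<and> (\<forall>j. continuous_on UNIV (pd j f)) \<and>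
     (\<exists>K. compact K \<and> K \<subseteq> U \<and> (\<forall>x. x \<notin> K \<longrightarrow> f x = 0))"

(* h10 U phi G : phi \<in> H^1_0(U)^3 and G is its (weak) gradient D phi, i.e. (phi, G) is the
   H^1-limit of (f_n, D f_n) with f_n \<in> C^1_c(U)^3 (closure of C_c in H^1). *)
definition h10 :: "(real^3) set \<Rightarrow> (real^3 \<Rightarrow> real^3) \<Rightarrow> (real^3 \<Rightarrow> real^3^3) \<Rightarrow> bool" where
  "h10 U \<phi> G \<longleftrightarrow> \<phi> \<in> borel_measurable (lebesgue_on U) \<and> G \<in> borel_measurable (lebesgue_on U) \<and>
     (\<exists>f. (\<forall>n. C1c U (f n)) \<and>
        ((\<lambda>n. \<integral>\<^sup>+x\<in>U. ennreal ((norm (f n x - \<phi> x))\<^sup>2) \<partial>lebesgue) \<longlonglongrightarrow> 0) \<and>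
        ((\<lambda>n. \<integral>\<^sup>+x\<in>U. ennreal ((norm (grad3 (f n) x - G x))\<^sup>2) \<partial>lebesgue) \<longlonglongrightarrow> 0))"

(* L^p norm over U (norm on real^3^3 is the Frobenius norm) *)
definition lp_norm :: "real \<Rightarrow> (real^3) set \<Rightarrow> (real^3 \<Rightarrow> 'b::real_normed_vector) \<Rightarrow> real" where
  "lp_norm p U f = (\<integral>x. norm (f x) powr p \<partial>(lebesgue_on U)) powr (1 / p)"

definition in_Lp :: "real \<Rightarrow> (real^3) set \<Rightarrow> (real^3 \<Rightarrow> 'b::real_normed_vector) \<Rightarrow> bool" where
  "in_Lp p U f \<longleftrightarrow> f \<in> borel_measurable (lebesgue_on U) \<and>
     integrable (lebesgue_on U) (\<lambda>x. norm (f x) powr p)"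

definition thin_dom :: "(real^2) set \<Rightarrow> (real^2 \<Rightarrow> real) \<Rightarrow> real \<Rightarrow> (real^3) set" where
  "thin_dom w h eps = {x. proj12 x \<in> w \<and> 0 < x $ 3 \<and> x $ 3 < eps * h (proj12 x)}"

definition rescale :: "real \<Rightarrow> (real^3 \<Rightarrow> real^3) \<Rightarrow> real^3 \<Rightarrow> real^3" where
  "rescale eps \<phi> z = \<phi> (pt3 (proj12 z) (eps * z $ 3))"

definition Deps :: "real \<Rightarrow> (real^3 \<Rightarrow> real^3^3) \<Rightarrow> real^3 \<Rightarrow> real^3^3" where
  "Deps eps G z = (\<chi> i j. if j = 3 then G z $ i $ j / eps else G z $ i $ j)"

end

theory Submission
  imports Defs
begin


definition W3 :: "3 \<Rightarrow> 3 \<Rightarrow> real \<Rightarrow> real \<Rightarrow> real \<Rightarrow> real^3" where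
  "W3 i j a b c = (\<chi> l. if l = i then a else if l = j then b else c)"

lemma W3_alt: "W3 i j a b c = c *\<^sub>R 1 + (a - c) *\<^sub>R axis i 1 + (if i = j then 0 else (b - c)) *\<^sub>R axis j 1"
  by (auto simp: vec_eq_iff W3_def axis_def)

lemma W3_meas[measurable]:
  assumes [measurable]: "f \<in> borel_measurable M" "g \<in> borel_measurable M" "h \<in> borel_measurable M"
  shows "(\<lambda>x. W3 i j (f x) (g x) (h x)) \<in> borel_measurable M"
  unfolding W3_alt by measurable

lemma W3_cont[continuous_intros]:
  assumes "continuous_on S f" "continuous_on S g" "continuous_on S h"
  shows "continuous_on S (\<lambda>x. W3 i j (f x) (g x) (h x))"
  unfolding W3_alt by (cases "i = j") (auto intro!: continuous_intros assms)

lemma UNIV3: fixes i j k :: 3 assumes "i \<noteq> j" "i \<noteq> k" "j \<noteq> k" shows "UNIV = {i,j,k}"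
proof -
  have "card {i,j,k} = CARD(3)" using assms by auto
  then have "{i,j,k} = UNIV" by (intro card_subset_eq) auto
  then show ?thesis by simp
qed

lemma Basis3: fixes i j k :: 3 assumes "i \<noteq> j" "i \<noteq> k" "j \<noteq> k"
  shows "(Basis :: (real^3) set) = insert (axis i 1) (insert (axis j 1) {axis k 1})"
  using UNIV3[OF assms] by (auto simp: Basis_vec_def)

lemma T3: fixes i j k :: 3 assumes ij: "i \<noteq> j" "i \<noteq> k" "j \<noteq> k"
  shows "(\<Sum>bb\<in>Basis. (x(axis i 1 := a)) bb *\<^sub>R bb) = W3 i j a (x (axis j (1::real))) (x (axis k (1::real)))"
proof -
  have ne: "axis i (1::real) \<noteq> axis j 1" "axis i (1::real) \<noteq> axis k 1" "axis j (1::real) \<noteq> axis k 1" using ij by (auto simp: axis_eq_axis)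
  show ?thesis
    unfolding Basis3[OF ij] using ne ij UNIV3[OF ij]
    by (auto simp: vec_eq_iff W3_def axis_def)
qed

lemma iter3:
  fixes G :: "real^3 \<Rightarrow> ennreal" and i j k :: 3
  assumes G[measurable]: "G \<in> borel_measurable borel" and ij: "i \<noteq> j" "i \<noteq> k" "j \<noteq> k"
  shows "(\<integral>\<^sup>+x. G x \<partial>lborel) = (\<integral>\<^sup>+c. \<integral>\<^sup>+b. \<integral>\<^sup>+a. G (W3 i j a b c) \<partial>lborel \<partial>lborel \<partial>lborel)"
proof -
  interpret P: product_sigma_finite "\<lambda>_::real^3. lborel::real measure" by standard
  let ?e = "\<lambda>l::3. axis l (1::real)"
  have ne: "?e i \<noteq> ?e j" "?e i \<noteq> ?e k" "?e j \<noteq> ?e k" using ij by (auto simp: axis_eq_axis)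
  let ?T = "\<lambda>f::real^3\<Rightarrow>real. \<Sum>b\<in>Basis. f b *\<^sub>R b"
  have Tm[measurable]: "?T \<in> borel_measurable (\<Pi>\<^sub>M b\<in>Basis. lborel)" by measurable
  have "(\<integral>\<^sup>+x. G x \<partial>lborel) = (\<integral>\<^sup>+f. G (?T f) \<partial>(\<Pi>\<^sub>M b\<in>Basis. lborel))"
    by (subst lborel_eq) (simp add: nn_integral_distr)
  also have "\<dots> = (\<integral>\<^sup>+f. G (?T f) \<partial>(\<Pi>\<^sub>M b\<in>insert (?e i) (insert (?e j) {?e k}). lborel))"
    using Basis3[OF ij] by simp
  also have "\<dots> = (\<integral>\<^sup>+x. \<integral>\<^sup>+a. G (?T (x(?e i := a))) \<partial>lborel \<partial>(\<Pi>\<^sub>M b\<in>insert (?e j) {?e k}. lborel))"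
    apply (rule P.product_nn_integral_insert)
    using ne apply auto
    unfolding Basis3[OF ij, symmetric] by measurable
  also have "\<dots> = (\<integral>\<^sup>+x. \<integral>\<^sup>+a. G (W3 i j a (x (?e j)) (x (?e k))) \<partial>lborel \<partial>(\<Pi>\<^sub>M b\<in>insert (?e j) {?e k}. lborel))"
    by (simp only: T3[OF ij])
  also have "\<dots> = (\<integral>\<^sup>+x. \<integral>\<^sup>+b. \<integral>\<^sup>+a. G (W3 i j a b (x (?e k))) \<partial>lborel \<partial>lborel \<partial>(\<Pi>\<^sub>M b\<in>{?e k}. lborel))"
    apply (subst P.product_nn_integral_insert)
    using ne apply auto
    by measurable
  also have "\<dots> = (\<integral>\<^sup>+c. \<integral>\<^sup>+b. \<integral>\<^sup>+a. G (W3 i j a b c) \<partial>lborel \<partial>lborel \<partial>lborel)"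
    apply (rule P.product_nn_integral_singleton[where f="\<lambda>c. \<integral>\<^sup>+b. \<integral>\<^sup>+a. G (W3 i j a b c) \<partial>lborel \<partial>lborel"])
    by measurable
  finally show ?thesis .
qed


lemma line_bound1:
  fixes g g' :: "real \<Rightarrow> real^3"
  assumes d: "\<And>s. (g has_vector_derivative g' s) (at s)" and c: "continuous_on UNIV g'"
    and B: "\<And>s. \<bar>s\<bar> > B \<Longrightarrow> g s = 0"
  shows "ennreal ((norm (g t))\<^sup>2) \<le> (\<integral>\<^sup>+s. ennreal (2 * norm (g s) * norm (g' s)) \<partial>lborel)"
proof -
  define a where "a = - (\<bar>B\<bar> + \<bar>t\<bar> + 1)"
  have at: "a \<le> t" unfolding a_def by auto
  have ga: "g a = 0" using B unfolding a_def by auto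
  have gc: "continuous_on UNIV g" using d
    by (meson continuous_at_imp_continuous_on has_vector_derivative_continuous)
  have dd: "((\<lambda>s. g s \<bullet> g s) has_vector_derivative (g s \<bullet> g' s + g' s \<bullet> g s)) (at s)" for s
    using bounded_bilinear.has_vector_derivative[OF bounded_bilinear_inner d d] by simp
  have "((\<lambda>s. g s \<bullet> g' s + g' s \<bullet> g s) has_integral (g t \<bullet> g t - g a \<bullet> g a)) {a..t}"
    by (rule fundamental_theorem_of_calculus[OF at]) (auto intro: has_vector_derivative_at_within dd)
  then have I1: "((\<lambda>s. 2 * (g s \<bullet> g' s)) has_integral (norm (g t))\<^sup>2) {a..t}"
    using ga by (simp add: inner_commute power2_norm_eq_inner)
  have cc: "continuous_on {a..t} (\<lambda>s. 2 * norm (g s) * norm (g' s))"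
    by (intro continuous_intros continuous_on_subset[OF gc] continuous_on_subset[OF c]) auto
  then have I2: "((\<lambda>s. 2 * norm (g s) * norm (g' s)) has_integral integral {a..t} (\<lambda>s. 2 * norm (g s) * norm (g' s))) {a..t}"
    using integrable_continuous_interval by blast
  have le: "(norm (g t))\<^sup>2 \<le> integral {a..t} (\<lambda>s. 2 * norm (g s) * norm (g' s))"
    by (rule has_integral_le[OF I1 I2]) (use norm_cauchy_schwarz in auto)
  have "(\<integral>\<^sup>+s. indicator {a..t} s * (2 * norm (g s) * norm (g' s)) \<partial>lborel) = integral {a..t} (\<lambda>s. 2 * norm (g s) * norm (g' s))"
    by (rule nn_integral_has_integral_lebesgue[OF _ I2]) auto
  moreover have "(\<integral>\<^sup>+s. indicator {a..t} s * (2 * norm (g s) * norm (g' s)) \<partial>lborel) \<le> (\<integral>\<^sup>+s. ennreal (2 * norm (g s) * norm (g' s)) \<partial>lborel)"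
    by (intro nn_integral_mono) (auto simp: indicator_def)
  ultimately show ?thesis using ennreal_leI[OF le] by simp
qed


lemma line_deriv:
  fixes f :: "real^'n \<Rightarrow> 'b::real_normed_vector"
  assumes "f differentiable (at (x + s *\<^sub>R axis k 1))"
  shows "((\<lambda>s. f (x + s *\<^sub>R axis k 1)) has_vector_derivative pd k f (x + s *\<^sub>R axis k 1)) (at s)"
proof -
  let ?e = "axis k (1::real)"
  let ?F = "frechet_derivative f (at (x + s *\<^sub>R ?e))"
  have l: "((\<lambda>s. x + s *\<^sub>R ?e) has_derivative (\<lambda>h. h *\<^sub>R ?e)) (at s)"
    by (auto intro!: derivative_eq_intros)
  have fd: "(f has_derivative ?F) (at (x + s *\<^sub>R ?e))"
    using assms frechet_derivative_works by blast
  have "((f \<circ> (\<lambda>s. x + s *\<^sub>R ?e)) has_derivative (?F \<circ> (\<lambda>h. h *\<^sub>R ?e))) (at s)"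
    by (rule diff_chain_at[OF l fd])
  moreover have "?F \<circ> (\<lambda>h. h *\<^sub>R ?e) = (\<lambda>h. h *\<^sub>R ?F ?e)"
    using has_derivative_linear[OF fd] by (auto simp: o_def linear_cmul)
  ultimately show ?thesis unfolding has_vector_derivative_def pd_def by (simp add: o_def)
qed

lemma line_bound:
  fixes f :: "real^3 \<Rightarrow> real^3"
  assumes diff: "\<forall>x. f differentiable (at x)" and cont: "continuous_on UNIV (pd k f)"
    and K: "compact K" "\<forall>x. x \<notin> K \<longrightarrow> f x = 0"
  shows "ennreal ((norm (f (x + t *\<^sub>R axis k 1)))\<^sup>2) \<le>
     (\<integral>\<^sup>+s. ennreal (2 * norm (f (x + s *\<^sub>R axis k 1)) * norm (pd k f (x + s *\<^sub>R axis k 1))) \<partial>lborel)"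
proof -
  obtain R where R: "\<And>y. y \<in> K \<Longrightarrow> norm y \<le> R"
    using compact_imp_bounded[OF K(1)] bounded_iff by blast
  have z: "f (x + s *\<^sub>R axis k 1) = 0" if "\<bar>s\<bar> > R + norm x" for s
  proof -
    have "norm (s *\<^sub>R axis k (1::real)) = \<bar>s\<bar>" by simp
    then have "norm (x + s *\<^sub>R axis k 1) > R"
      using that norm_triangle_ineq2[of "s *\<^sub>R axis k (1::real)" "-x"] by (auto simp: algebra_simps)
    then show ?thesis using R K(2) by force
  qed
  show ?thesis
  proof (rule line_bound1[where g="\<lambda>s. f (x + s *\<^sub>R axis k 1)"])
    show "((\<lambda>s. f (x + s *\<^sub>R axis k 1)) has_vector_derivative pd k f (x + s *\<^sub>R axis k 1)) (at s)" for s
      using line_deriv diff by blast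
    show "continuous_on UNIV (\<lambda>s. pd k f (x + s *\<^sub>R axis k 1))"
      by (rule continuous_on_compose2[OF cont]) (auto intro!: continuous_intros)
  qed (rule z)
qed

lemma enn_sq_le: fixes x y :: ennreal assumes "x^2 \<le> y^2" shows "x \<le> y"
proof (cases x rule: ennreal_cases)
  case (real r)
  then show ?thesis
  proof (cases y rule: ennreal_cases)
    case (real s)
    have "ennreal (r^2) \<le> ennreal (s^2)" using assms real \<open>x = ennreal r\<close> \<open>0 \<le> r\<close> by (simp add: ennreal_power)
    then have "r^2 \<le> s^2" using ennreal_le_iff[of "s^2" "r^2"] by simp
    then have "r \<le> s" using \<open>0 \<le> s\<close> by (rule power2_le_imp_le)
    with \<open>x = ennreal r\<close> real show ?thesis by (simp add: ennreal_leI)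
  qed simp
next
  case top
  then show ?thesis using assms
    by (cases y rule: ennreal_cases) (auto simp: power2_eq_square ennreal_mult_top ennreal_mult[symmetric] top_unique)
qed
lemma enn_amgm: fixes a b :: ennreal shows "4*a*b \<le> (a+b)^2"
proof (cases a rule: ennreal_cases)
  case (real x)
  then show ?thesis
  proof (cases b rule: ennreal_cases)
    case (real y)
    have "4*x*y \<le> (x+y)^2" using zero_le_square[of "x - y"] by (simp add: power2_eq_square algebra_simps)
    have e1: "4 * ennreal x * ennreal y = ennreal (4*x*y)" using \<open>0 \<le> x\<close> real by (simp add: ennreal_mult)
    have "ennreal x + ennreal y = ennreal (x+y)" using \<open>0 \<le> x\<close> real by (simp add: ennreal_plus)
    then have e2: "(ennreal x + ennreal y)^2 = ennreal ((x+y)^2)" using \<open>0 \<le> x\<close> real by (metis ennreal_power add_nonneg_nonneg)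
    from \<open>4*x*y \<le> (x+y)^2\<close> have "ennreal (4*x*y) \<le> ennreal ((x+y)^2)" by (rule ennreal_leI)
    with e1 e2 \<open>a = ennreal x\<close> real show ?thesis by simp
  next
    case top then show ?thesis by (cases "a = 0") (auto simp: power2_eq_square ennreal_mult_top)
  qed
next
  case top then show ?thesis by (cases "b = 0") (auto simp: power2_eq_square ennreal_mult_top ennreal_top_mult)
qed


lemma fin_int:
  fixes g :: "real^3 \<Rightarrow> real"
  assumes "continuous_on UNIV g" "compact K" "\<forall>x. x \<notin> K \<longrightarrow> g x = 0"
  shows "(\<integral>\<^sup>+x. ennreal (g x) \<partial>lborel) < \<infinity>"
proof -
  have "compact (g ` K)" using assms(1,2) by (meson compact_continuous_image continuous_on_subset subset_UNIV)
  then obtain M where M: "\<And>x. x \<in> K \<Longrightarrow> norm (g x) \<le> M"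
    using compact_imp_bounded bounded_iff by (metis imageI)
  have "(\<integral>\<^sup>+x. ennreal (g x) \<partial>lborel) \<le> (\<integral>\<^sup>+x. ennreal M * indicator K x \<partial>lborel)"
    using M assms(3) by (intro nn_integral_mono) (auto simp: indicator_def abs_le_iff intro!: ennreal_leI)
  also have "\<dots> = ennreal M * emeasure lborel K"
    using assms(2) by (intro nn_integral_cmult_indicator) (simp add: borel_compact)
  also have "\<dots> < \<infinity>" using emeasure_compact_finite[OF assms(2)]
    by (simp add: ennreal_mult_less_top)
  finally show ?thesis .
qed

lemma CS2:
  fixes u v :: "real \<Rightarrow> real \<Rightarrow> ennreal"
  assumes [measurable]: "(\<lambda>p. u (fst p) (snd p)) \<in> borel_measurable (lborel \<Otimes>\<^sub>M lborel)"
    "(\<lambda>p. v (fst p) (snd p)) \<in> borel_measurable (lborel \<Otimes>\<^sub>M lborel)"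
  shows "(\<integral>\<^sup>+b. \<integral>\<^sup>+a. u a b * v a b \<partial>lborel \<partial>lborel)^2 \<le>
     (\<integral>\<^sup>+b. \<integral>\<^sup>+a. (u a b)^2 \<partial>lborel \<partial>lborel) * (\<integral>\<^sup>+b. \<integral>\<^sup>+a. (v a b)^2 \<partial>lborel \<partial>lborel)"
proof -
  have e: "(\<integral>\<^sup>+b. \<integral>\<^sup>+a. w (a, b) \<partial>lborel \<partial>lborel) = integral\<^sup>N (lborel \<Otimes>\<^sub>M lborel) w"
    if [measurable]: "w \<in> borel_measurable (lborel \<Otimes>\<^sub>M lborel)" for w :: "real \<times> real \<Rightarrow> ennreal"
    by (rule lborel_pair.nn_integral_snd) measurable
  have 1: "(\<integral>\<^sup>+b. \<integral>\<^sup>+a. u a b * v a b \<partial>lborel \<partial>lborel) = (\<integral>\<^sup>+p. u (fst p) (snd p) * v (fst p) (snd p) \<partial>(lborel \<Otimes>\<^sub>M lborel))"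
    using e[of "\<lambda>p. u (fst p) (snd p) * v (fst p) (snd p)"] by simp
  have 2: "(\<integral>\<^sup>+b. \<integral>\<^sup>+a. (u a b)^2 \<partial>lborel \<partial>lborel) = (\<integral>\<^sup>+p. (u (fst p) (snd p))^2 \<partial>(lborel \<Otimes>\<^sub>M lborel))"
    using e[of "\<lambda>p. (u (fst p) (snd p))^2"] by simp
  have 3: "(\<integral>\<^sup>+b. \<integral>\<^sup>+a. (v a b)^2 \<partial>lborel \<partial>lborel) = (\<integral>\<^sup>+p. (v (fst p) (snd p))^2 \<partial>(lborel \<Otimes>\<^sub>M lborel))"
    using e[of "\<lambda>p. (v (fst p) (snd p))^2"] by simp
  show ?thesis unfolding 1 2 3 by (rule Cauchy_Schwarz_nn_integral) measurable
qed

lemma perm312: "W3 1 2 a b c = W3 3 1 c a b"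
  by (auto simp: vec_eq_iff W3_def forall_3)
lemma perm213: "W3 1 2 a b c = W3 2 1 b a c"
  by (auto simp: vec_eq_iff W3_def forall_3)
lemma W3_first: "W3 i j s b c = W3 i j 0 b c + s *\<^sub>R axis i 1"
  by (auto simp: vec_eq_iff W3_def axis_def)
lemma W3_comp3: "W3 1 2 a b c $ 3 = c" "W3 3 1 a b c $ 3 = a"
  by (auto simp: W3_def)



lemma core:
  fixes f :: "real^3 \<Rightarrow> real^3" and L :: real and K
  assumes diff: "\<forall>x. f differentiable (at x)" and cont: "\<forall>j. continuous_on UNIV (pd j f)"
    and K: "compact K" "\<forall>x. x \<notin> K \<longrightarrow> f x = 0"
    and supp: "\<forall>x. f x \<noteq> 0 \<longrightarrow> 0 < x$3 \<and> x$3 < L" and Lpos: "L > 0"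
  shows "(\<integral>\<^sup>+x. ennreal ((norm (f x))^4) \<partial>lborel) \<le> 8 * ennreal L * (\<integral>\<^sup>+x. ennreal ((norm (pd 3 f x))^2) \<partial>lborel)
           * ((\<integral>\<^sup>+x. ennreal ((norm (pd 1 f x))^2) \<partial>lborel) + (\<integral>\<^sup>+x. ennreal ((norm (pd 2 f x))^2) \<partial>lborel))"
proof -
  have fc: "continuous_on UNIV f"
    using diff by (meson differentiable_at_imp_differentiable_on differentiable_imp_continuous_on)
  have fm[measurable]: "f \<in> borel_measurable borel" by (rule borel_measurable_continuous_onI[OF fc])
  have pm[measurable]: "pd j f \<in> borel_measurable borel" for j using cont borel_measurable_continuous_onI by blast
  define N0 where "N0 x = ennreal (norm (f x))" for x
  define ND where "ND j x = ennreal (norm (pd j f x))" for j x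
  have N0m[measurable]: "N0 \<in> borel_measurable borel" unfolding N0_def by measurable
  have NDm[measurable]: "ND j \<in> borel_measurable borel" for j unfolding ND_def by measurable
  have LB: "(N0 (x + t *\<^sub>R axis k 1))^2 \<le> (\<integral>\<^sup>+s. 2 * N0 (x + s *\<^sub>R axis k 1) * ND k (x + s *\<^sub>R axis k 1) \<partial>lborel)" for x t k
    using line_bound[OF diff spec[OF cont, of k] K, of x t]
    by (simp add: N0_def ND_def ennreal_power ennreal_mult)
  have LW: "(N0 (W3 i j a b c))^2 \<le> (\<integral>\<^sup>+s. 2 * N0 (W3 i j s b c) * ND i (W3 i j s b c) \<partial>lborel)" for i j a b c
    using LB[of "W3 i j 0 b c" a i] by (simp only: W3_first[symmetric])
  have Z: "N0 x = 0" if "\<not> (0 < x$3 \<and> x$3 < L)" for x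
    using supp that unfolding N0_def by auto
  define Lam where "Lam b c = (\<integral>\<^sup>+s. 2 * N0 (W3 3 1 s b c) * ND 3 (W3 3 1 s b c) \<partial>lborel)" for b c
  define P3 where "P3 = (\<integral>\<^sup>+x. 2 * N0 x * ND 3 x \<partial>lborel)"
  define F where "F = (\<integral>\<^sup>+x. (N0 x)^2 \<partial>lborel)"
  define E where "E j = (\<integral>\<^sup>+x. (ND j x)^2 \<partial>lborel)" for j
  have P3_it: "P3 = (\<integral>\<^sup>+c. \<integral>\<^sup>+b. Lam b c \<partial>lborel \<partial>lborel)"
    unfolding P3_def Lam_def by (rule iter3[of _ 3 1 2]) auto
  have F_le: "F \<le> ennreal L * P3"
  proof -
    have "F = (\<integral>\<^sup>+c. \<integral>\<^sup>+b. \<integral>\<^sup>+a. (N0 (W3 3 1 a b c))^2 \<partial>lborel \<partial>lborel \<partial>lborel)"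
      unfolding F_def by (rule iter3[of _ 3 1 2]) auto
    also have "\<dots> \<le> (\<integral>\<^sup>+c. \<integral>\<^sup>+b. \<integral>\<^sup>+a. Lam b c * indicator {0..L} a \<partial>lborel \<partial>lborel \<partial>lborel)"
    proof (intro nn_integral_mono)
      fix a b c
      show "(N0 (W3 3 1 a b c))^2 \<le> Lam b c * indicator {0..L} a"
      proof (cases "a \<in> {0..L}")
        case True then show ?thesis using LW[of 3 1 a b c] by (simp add: Lam_def)
      next
        case False then show ?thesis using Z[of "W3 3 1 a b c"] by (auto simp: W3_comp3)
      qed
    qed
    also have "\<dots> = (\<integral>\<^sup>+c. \<integral>\<^sup>+b. ennreal L * Lam b c \<partial>lborel \<partial>lborel)"
    proof (intro nn_integral_cong)
      fix b c
      show "(\<integral>\<^sup>+a. Lam b c * indicator {0..L} a \<partial>lborel) = ennreal L * Lam b c"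
        using nn_integral_cmult_indicator[of "{0..L}" lborel "Lam b c"] Lpos by (simp add: mult.commute)
    qed
    also have "\<dots> = ennreal L * P3"
      unfolding P3_it Lam_def by (simp add: nn_integral_cmult)
    finally show ?thesis .
  qed
  have P3_fin: "P3 < \<infinity>"
  proof -
    have "P3 = (\<integral>\<^sup>+x. ennreal (2 * norm (f x) * norm (pd 3 f x)) \<partial>lborel)"
      unfolding P3_def N0_def ND_def by (simp add: ennreal_mult)
    also have "\<dots> < \<infinity>"
      by (rule fin_int[OF _ K(1)]) (use K(2) in \<open>auto intro!: continuous_intros fc cont[rule_format]\<close>)
    finally show ?thesis .
  qed
  have CS3: "P3^2 \<le> 4 * F * E 3"
  proof -
    have "P3^2 \<le> (\<integral>\<^sup>+x. (2 * N0 x)^2 \<partial>lborel) * E 3"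
      unfolding P3_def E_def by (rule Cauchy_Schwarz_nn_integral) auto
    also have "(\<integral>\<^sup>+x. (2 * N0 x)^2 \<partial>lborel) = 4 * F"
      unfolding F_def by (simp add: power_mult_distrib nn_integral_cmult)
    finally show ?thesis by (simp add: mult.assoc)
  qed
  have P3_le: "P3 \<le> 4 * ennreal L * E 3"
  proof (cases "P3 = 0")
    case False
    have "P3 * P3 \<le> P3 * (4 * ennreal L * E 3)"
    proof -
      have "P3 * P3 = P3^2" by (simp add: power2_eq_square)
      also have "\<dots> \<le> 4 * F * E 3" by (rule CS3)
      also have "\<dots> \<le> 4 * (ennreal L * P3) * E 3" by (intro mult_mono F_le) auto
      also have "\<dots> = P3 * (4 * ennreal L * E 3)" by (simp add: ac_simps)
      finally show ?thesis .
    qed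
    then show ?thesis using False P3_fin by (simp add: ennreal_mult_le_mult_iff)
  qed simp
  define S where "S c = (\<integral>\<^sup>+b. \<integral>\<^sup>+a. (N0 (W3 1 2 a b c))^2 \<partial>lborel \<partial>lborel)" for c
  define Q where "Q j c = (\<integral>\<^sup>+b. \<integral>\<^sup>+a. (ND j (W3 1 2 a b c))^2 \<partial>lborel \<partial>lborel)" for j c
  define P where "P j c = (\<integral>\<^sup>+b. \<integral>\<^sup>+a. 2 * N0 (W3 1 2 a b c) * ND j (W3 1 2 a b c) \<partial>lborel \<partial>lborel)" for j c
  define T4 where "T4 c = (\<integral>\<^sup>+b. \<integral>\<^sup>+a. (N0 (W3 1 2 a b c))^4 \<partial>lborel \<partial>lborel)" for c
  have S_le: "S c \<le> P3" for c
  proof -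
    have "S c \<le> (\<integral>\<^sup>+b. \<integral>\<^sup>+a. Lam a b \<partial>lborel \<partial>lborel)"
      unfolding S_def Lam_def
      by (intro nn_integral_mono) (simp only: perm312 LW)
    then show ?thesis by (simp add: P3_it)
  qed
  have CSa: "(P j c)^2 \<le> 4 * S c * Q j c" for j c
  proof -
    have "(P j c)^2 \<le> (\<integral>\<^sup>+b. \<integral>\<^sup>+a. (2 * N0 (W3 1 2 a b c))^2 \<partial>lborel \<partial>lborel) * Q j c"
      unfolding P_def Q_def mult.assoc[of 2]
      by (rule CS2[where u="\<lambda>a b. 2 * N0 (W3 1 2 a b c)" and v="\<lambda>a b. ND j (W3 1 2 a b c)", simplified mult.assoc]) measurable
    also have "(\<integral>\<^sup>+b. \<integral>\<^sup>+a. (2 * N0 (W3 1 2 a b c))^2 \<partial>lborel \<partial>lborel) = 4 * S c"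
      unfolding S_def by (simp add: power_mult_distrib nn_integral_cmult)
    finally show ?thesis by (simp add: mult.assoc)
  qed
  have T4_le: "T4 c \<le> P 1 c * P 2 c" for c
  proof -
    define al where "al b = (\<integral>\<^sup>+s. 2 * N0 (W3 1 2 s b c) * ND 1 (W3 1 2 s b c) \<partial>lborel)" for b
    define be where "be a = (\<integral>\<^sup>+s. 2 * N0 (W3 2 1 s a c) * ND 2 (W3 2 1 s a c) \<partial>lborel)" for a
    have alm[measurable]: "al \<in> borel_measurable borel" unfolding al_def by measurable
    have bem[measurable]: "be \<in> borel_measurable borel" unfolding be_def by measurable
    have "T4 c \<le> (\<integral>\<^sup>+b. \<integral>\<^sup>+a. al b * be a \<partial>lborel \<partial>lborel)"
      unfolding T4_def
    proof (intro nn_integral_mono)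
      fix a b
      have "(N0 (W3 1 2 a b c))^4 = (N0 (W3 1 2 a b c))^2 * (N0 (W3 1 2 a b c))^2"
        by (simp add: power_add[symmetric])
      also have "\<dots> \<le> al b * be a"
      proof (rule mult_mono)
        show "(N0 (W3 1 2 a b c))^2 \<le> al b" unfolding al_def by (rule LW)
        show "(N0 (W3 1 2 a b c))^2 \<le> be a" unfolding be_def perm213 by (rule LW)
      qed auto
      finally show "(N0 (W3 1 2 a b c))^4 \<le> al b * be a" .
    qed
    also have "\<dots> = (\<integral>\<^sup>+b. al b \<partial>lborel) * (\<integral>\<^sup>+a. be a \<partial>lborel)"
      by (simp add: nn_integral_cmult nn_integral_multc)
    also have "(\<integral>\<^sup>+b. al b \<partial>lborel) = P 1 c" unfolding al_def P_def ..
    also have "(\<integral>\<^sup>+a. be a \<partial>lborel) = P 2 c"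
    proof -
      have "(\<integral>\<^sup>+a. be a \<partial>lborel) = (\<integral>\<^sup>+a. \<integral>\<^sup>+b. 2 * N0 (W3 1 2 a b c) * ND 2 (W3 1 2 a b c) \<partial>lborel \<partial>lborel)"
        unfolding be_def perm213 ..
      also have "\<dots> = P 2 c" unfolding P_def
        by (rule lborel_pair.Fubini'[symmetric]) measurable
      finally show ?thesis .
    qed
    finally show ?thesis .
  qed
  have T4_le2: "T4 c \<le> 2 * P3 * (Q 1 c + Q 2 c)" for c
  proof -
    have "(P 1 c * P 2 c)^2 = (P 1 c)^2 * (P 2 c)^2" by (simp add: power_mult_distrib)
    also have "\<dots> \<le> (4 * S c * Q 1 c) * (4 * S c * Q 2 c)" by (intro mult_mono CSa) auto
    also have "\<dots> = 4 * (S c)^2 * (4 * Q 1 c * Q 2 c)" by (simp add: power2_eq_square ac_simps)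
    also have "\<dots> \<le> 4 * (S c)^2 * (Q 1 c + Q 2 c)^2" by (intro mult_left_mono enn_amgm) auto
    also have "\<dots> = (2 * S c * (Q 1 c + Q 2 c))^2" by (simp add: power_mult_distrib)
    finally have "P 1 c * P 2 c \<le> 2 * S c * (Q 1 c + Q 2 c)" by (rule enn_sq_le)
    also have "\<dots> \<le> 2 * P3 * (Q 1 c + Q 2 c)" by (intro mult_right_mono mult_left_mono S_le) auto
    finally show ?thesis using T4_le[of c] by (rule order_trans[rotated])
  qed
  have QE: "(\<integral>\<^sup>+c. Q j c \<partial>lborel) = E j" for j
    unfolding Q_def E_def by (rule iter3[of _ 1 2 3, symmetric]) auto
  have "(\<integral>\<^sup>+x. (N0 x)^4 \<partial>lborel) = (\<integral>\<^sup>+c. T4 c \<partial>lborel)"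
    unfolding T4_def by (rule iter3[of _ 1 2 3]) auto
  also have "\<dots> \<le> (\<integral>\<^sup>+c. 2 * P3 * (Q 1 c + Q 2 c) \<partial>lborel)"
    by (intro nn_integral_mono T4_le2)
  also have "\<dots> = 2 * P3 * ((\<integral>\<^sup>+c. Q 1 c \<partial>lborel) + (\<integral>\<^sup>+c. Q 2 c \<partial>lborel))"
    unfolding Q_def by (simp add: nn_integral_cmult nn_integral_add)
  also have "\<dots> = 2 * P3 * (E 1 + E 2)" using QE by simp
  also have "2 * P3 * (E 1 + E 2) \<le> 2 * (4 * ennreal L * E 3) * (E 1 + E 2)"
    by (intro mult_right_mono mult_left_mono P3_le) auto
  also have "2 * (4 * ennreal L * E 3) * (E 1 + E 2) = 8 * ennreal L * E 3 * (E 1 + E 2)"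
  proof -
    have "(2::ennreal) * 4 = 8" by simp
    then show ?thesis by (metis mult.assoc)
  qed
  finally have "(\<integral>\<^sup>+x. (N0 x)^4 \<partial>lborel) \<le> 8 * ennreal L * E 3 * (E 1 + E 2)" .
  then show ?thesis
    unfolding N0_def E_def ND_def by (simp add: ennreal_power)
qed


lemma ae_subseq:
  fixes u :: "nat \<Rightarrow> 'a \<Rightarrow> 'b::{banach,second_countable_topology}"
  assumes fm: "finite_measure M" and [measurable]: "\<And>n. u n \<in> borel_measurable M" "\<phi> \<in> borel_measurable M"
    and a: "(\<lambda>n. \<integral>\<^sup>+x. ennreal ((norm (u n x - \<phi> x))\<^sup>2) \<partial>M) \<longlonglongrightarrow> 0"
  shows "\<exists>r. strict_mono r \<and> (AE x in M. (\<lambda>n. u (r n) x) \<longlonglongrightarrow> \<phi> x)"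
proof -
  interpret finite_measure M by (rule fm)
  define w where "w n x = min 1 ((norm (u n x - \<phi> x))\<^sup>2)" for n x
  have wm[measurable]: "w n \<in> borel_measurable M" for n unfolding w_def by measurable
  have wi: "integrable M (w n)" for n
    by (rule integrable_const_bound[where B=1]) (auto simp: w_def)
  have le: "(\<integral>\<^sup>+x. ennreal (norm (w n x)) \<partial>M) \<le> (\<integral>\<^sup>+x. ennreal ((norm (u n x - \<phi> x))\<^sup>2) \<partial>M)" for n
    by (intro nn_integral_mono ennreal_leI) (auto simp: w_def)
  have t0: "(\<lambda>n. \<integral>\<^sup>+x. ennreal (norm (w n x)) \<partial>M) \<longlonglongrightarrow> 0"
    by (rule tendsto_sandwich[OF _ _ tendsto_const a]) (use le in auto)
  have "(\<lambda>n. enn2real (\<integral>\<^sup>+x. ennreal (norm (w n x)) \<partial>M)) \<longlonglongrightarrow> 0"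
    using tendsto_enn2real[of _ 0] t0 by simp
  moreover have "(\<integral>x. norm (w n x) \<partial>M) = enn2real (\<integral>\<^sup>+x. ennreal (norm (w n x)) \<partial>M)" for n
    by (rule integral_eq_nn_integral) auto
  ultimately have "(\<lambda>n. \<integral>x. norm (w n x) \<partial>M) \<longlonglongrightarrow> 0" by simp
  then obtain r where r: "strict_mono r" and ae: "AE x in M. (\<lambda>n. w (r n) x) \<longlonglongrightarrow> 0"
    using tendsto_L1_AE_subseq[of M w, OF wi] by blast
  have "AE x in M. (\<lambda>n. u (r n) x) \<longlonglongrightarrow> \<phi> x"
    using ae
  proof eventually_elim
    case (elim x)
    have "eventually (\<lambda>n. w (r n) x < 1) sequentially"
      using order_tendstoD(2)[OF elim] by simp
    then have "eventually (\<lambda>n. w (r n) x = (norm (u (r n) x - \<phi> x))\<^sup>2) sequentially"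
      by eventually_elim (auto simp: w_def)
    then have "(\<lambda>n. (norm (u (r n) x - \<phi> x))\<^sup>2) \<longlonglongrightarrow> 0"
      using elim tendsto_cong by fastforce
    then have "(\<lambda>n. sqrt ((norm (u (r n) x - \<phi> x))\<^sup>2)) \<longlonglongrightarrow> 0"
      using tendsto_real_sqrt by fastforce
    then have "(\<lambda>n. norm (u (r n) x - \<phi> x)) \<longlonglongrightarrow> 0" by simp
    then show ?case by (simp add: tendsto_norm_zero_iff LIM_zero_iff)
  qed
  with r show ?thesis by blast
qed



lemma sq_split:
  fixes p q np d :: real
  assumes "0 \<le> p" "0 \<le> q" "np \<le> p + q" "0 \<le> np" "d > 0"
  shows "np^2 \<le> (1+d) * p^2 + (1 + 1/d) * q^2"
proof -
  have "0 \<le> d * (p - q/d)^2" using assms by simp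
  also have "d * (p - q/d)^2 = d * p^2 - 2*p*q + q^2/d" using assms(5)
    by (simp add: power2_eq_square field_simps)
  finally have "2*p*q \<le> d*p^2 + q^2/d" by simp
  moreover have "np^2 \<le> (p+q)^2" using assms by (intro power_mono) auto
  moreover have "(p+q)^2 = p^2 + 2*p*q + q^2" by (simp add: power2_eq_square algebra_simps)
  moreover have "(1+d) * p^2 + (1 + 1/d) * q^2 = p^2 + (d*p^2 + q^2/d) + q^2"
    by (simp add: algebra_simps add_divide_distrib)
  ultimately show ?thesis by linarith
qed

lemma lim_arg:
  fixes u :: "nat \<Rightarrow> 'a \<Rightarrow> 'b::{banach,second_countable_topology}"
    and V :: "nat \<Rightarrow> 'a \<Rightarrow> 'c::{banach,second_countable_topology}"
  assumes fm: "finite_measure M"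
   and [measurable]: "\<And>n. u n \<in> borel_measurable M" "\<phi> \<in> borel_measurable M" "\<And>n. V n \<in> borel_measurable M" "\<Psi> \<in> borel_measurable M"
   and a: "(\<lambda>n. \<integral>\<^sup>+x. ennreal ((norm (u n x - \<phi> x))\<^sup>2) \<partial>M) \<longlonglongrightarrow> 0"
   and b: "(\<lambda>n. \<integral>\<^sup>+x. ennreal ((norm (V n x - \<Psi> x))\<^sup>2) \<partial>M) \<longlonglongrightarrow> 0"
   and bd: "\<And>n. (\<integral>\<^sup>+x. ennreal ((norm (u n x))^4) \<partial>M) \<le> ennreal K * (\<integral>\<^sup>+x. ennreal ((norm (V n x))\<^sup>2) \<partial>M)^2"
   and fin: "\<And>n. (\<integral>\<^sup>+x. ennreal ((norm (V n x))\<^sup>2) \<partial>M) < \<infinity>"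
   and K: "K \<ge> 0"
  shows "integrable M (\<lambda>x. norm (\<phi> x) powr 4) \<and> (\<integral>x. norm (\<phi> x) powr 4 \<partial>M) \<le> K * (\<integral>x. norm (\<Psi> x) powr 2 \<partial>M)^2"
proof -
  define bb where "bb n = (\<integral>\<^sup>+x. ennreal ((norm (V n x - \<Psi> x))\<^sup>2) \<partial>M)" for n
  define Gs where "Gs = (\<integral>\<^sup>+x. ennreal ((norm (\<Psi> x))\<^sup>2) \<partial>M)"
  define X where "X = (\<integral>\<^sup>+x. ennreal ((norm (\<phi> x))^4) \<partial>M)"
  have ev_bb: "eventually (\<lambda>n. bb n < ennreal e) sequentially" if "e > 0" for e
    using order_tendstoD(2)[OF b, of "ennreal e"] that unfolding bb_def by simp
  obtain n0 where n0: "bb n0 < 1"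
    using eventually_happens'[OF _ ev_bb[of 1]] by auto
  have "Gs \<le> (\<integral>\<^sup>+x. 2 * ennreal ((norm (V n0 x))\<^sup>2) + 2 * ennreal ((norm (V n0 x - \<Psi> x))\<^sup>2) \<partial>M)"
    unfolding Gs_def
  proof (intro nn_integral_mono)
    fix x
    have "norm (\<Psi> x) \<le> norm (V n0 x) + norm (V n0 x - \<Psi> x)"
      by (metis add_diff_cancel_left' diff_add_cancel norm_triangle_ineq4 add.commute)
    from sq_split[OF norm_ge_zero norm_ge_zero this norm_ge_zero, of 1]
    have "(norm (\<Psi> x))\<^sup>2 \<le> 2 * (norm (V n0 x))\<^sup>2 + 2 * (norm (V n0 x - \<Psi> x))\<^sup>2" by simp
    then show "ennreal ((norm (\<Psi> x))\<^sup>2) \<le> 2 * ennreal ((norm (V n0 x))\<^sup>2) + 2 * ennreal ((norm (V n0 x - \<Psi> x))\<^sup>2)"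
    proof -
      have "ennreal ((norm (\<Psi> x))\<^sup>2) \<le> ennreal (2 * (norm (V n0 x))\<^sup>2 + 2 * (norm (V n0 x - \<Psi> x))\<^sup>2)"
        by (rule ennreal_leI) fact
      also have "\<dots> = 2 * ennreal ((norm (V n0 x))\<^sup>2) + 2 * ennreal ((norm (V n0 x - \<Psi> x))\<^sup>2)"
        by (simp add: ennreal_plus ennreal_mult)
      finally show ?thesis .
    qed
  qed
  also have "\<dots> = 2 * (\<integral>\<^sup>+x. ennreal ((norm (V n0 x))\<^sup>2) \<partial>M) + 2 * bb n0"
    unfolding bb_def by (simp add: nn_integral_add nn_integral_cmult)
  also have "\<dots> < \<infinity>"
  proof -
    have "bb n0 \<noteq> \<infinity>" using n0 by (auto simp: top_unique)
    then show ?thesis using fin[of n0] by (simp add: ennreal_mult_eq_top_iff less_top[symmetric])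
  qed
  finally have Gfin: "Gs < \<infinity>" .
  then obtain g where g: "Gs = ennreal g" "0 \<le> g" by (cases Gs rule: ennreal_cases) auto
  obtain r where r: "strict_mono r" and ae: "AE x in M. (\<lambda>n. u (r n) x) \<longlonglongrightarrow> \<phi> x"
    using ae_subseq[OF fm assms(2,3) a] by blast
  have key: "X \<le> ennreal (K * ((1+d) * g + (1 + 1/d) * e)^2)" if d: "d > 0" and e: "e > 0" for d e
  proof -
    define B where "B = (1+d) * g + (1 + 1/d) * e"
    have B0: "B \<ge> 0" unfolding B_def using d e g by simp
    have evV: "eventually (\<lambda>n. (\<integral>\<^sup>+x. ennreal ((norm (V n x))\<^sup>2) \<partial>M) \<le> ennreal B) sequentially"
      using ev_bb[OF e]
    proof eventually_elim
      case (elim n)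
      have "(\<integral>\<^sup>+x. ennreal ((norm (V n x))\<^sup>2) \<partial>M) \<le>
            (\<integral>\<^sup>+x. ennreal (1+d) * ennreal ((norm (\<Psi> x))\<^sup>2) + ennreal (1 + 1/d) * ennreal ((norm (V n x - \<Psi> x))\<^sup>2) \<partial>M)"
      proof (intro nn_integral_mono)
        fix x
        have "norm (V n x) \<le> norm (\<Psi> x) + norm (V n x - \<Psi> x)"
          by (metis diff_add_cancel norm_triangle_ineq add.commute)
        from sq_split[OF norm_ge_zero norm_ge_zero this norm_ge_zero d]
        have "(norm (V n x))\<^sup>2 \<le> (1+d) * (norm (\<Psi> x))\<^sup>2 + (1 + 1/d) * (norm (V n x - \<Psi> x))\<^sup>2" .
        then show "ennreal ((norm (V n x))\<^sup>2) \<le> ennreal (1+d) * ennreal ((norm (\<Psi> x))\<^sup>2) + ennreal (1 + 1/d) * ennreal ((norm (V n x - \<Psi> x))\<^sup>2)"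
          using d by (simp add: ennreal_mult[symmetric] ennreal_plus[symmetric] del: ennreal_plus ennreal_mult ennreal_leI; intro ennreal_leI; simp)
      qed
      also have "\<dots> = ennreal (1+d) * Gs + ennreal (1 + 1/d) * bb n"
        unfolding Gs_def bb_def by (simp add: nn_integral_add nn_integral_cmult)
      also have "\<dots> \<le> ennreal (1+d) * ennreal g + ennreal (1 + 1/d) * ennreal e"
        using elim g by (intro add_mono mult_left_mono) auto
      also have "\<dots> = ennreal B" unfolding B_def using d e g
        by (simp add: ennreal_mult[symmetric] ennreal_plus[symmetric] del: ennreal_plus)
      finally show ?case .
    qed
    have evU: "eventually (\<lambda>n. (\<integral>\<^sup>+x. ennreal ((norm (u n x))^4) \<partial>M) \<le> ennreal (K * B^2)) sequentially"
      using evV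
    proof eventually_elim
      case (elim n)
      have "(\<integral>\<^sup>+x. ennreal ((norm (u n x))^4) \<partial>M) \<le> ennreal K * (\<integral>\<^sup>+x. ennreal ((norm (V n x))\<^sup>2) \<partial>M)^2" by (rule bd)
      also have "\<dots> \<le> ennreal K * (ennreal B)^2" by (intro mult_left_mono power_mono elim) auto
      also have "\<dots> = ennreal (K * B^2)" using K B0 by (simp add: ennreal_mult ennreal_power)
      finally show ?case .
    qed
    have evU': "eventually (\<lambda>n. (\<integral>\<^sup>+x. ennreal ((norm (u (r n) x))^4) \<partial>M) \<le> ennreal (K * B^2)) sequentially"
      using eventually_compose_filterlim[OF evU filterlim_subseq[OF r]] by simp
    have "X = (\<integral>\<^sup>+x. liminf (\<lambda>n. ennreal ((norm (u (r n) x))^4)) \<partial>M)"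
      unfolding X_def
    proof (intro nn_integral_cong_AE)
      show "AE x in M. ennreal ((norm (\<phi> x))^4) = liminf (\<lambda>n. ennreal ((norm (u (r n) x))^4))"
        using ae
      proof eventually_elim
        case (elim x)
        have "(\<lambda>n. ennreal ((norm (u (r n) x))^4)) \<longlonglongrightarrow> ennreal ((norm (\<phi> x))^4)"
          by (intro tendsto_intros elim)
        then show ?case by (intro lim_imp_Liminf[symmetric]) auto
      qed
    qed
    also have "\<dots> \<le> liminf (\<lambda>n. (\<integral>\<^sup>+x. ennreal ((norm (u (r n) x))^4) \<partial>M))"
      by (rule nn_integral_liminf) measurable
    also have "\<dots> \<le> limsup (\<lambda>n. (\<integral>\<^sup>+x. ennreal ((norm (u (r n) x))^4) \<partial>M))"
      by (rule Liminf_le_Limsup) simp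
    also have "\<dots> \<le> ennreal (K * B^2)"
      by (rule Limsup_bounded[OF evU'])
    finally show ?thesis unfolding B_def .
  qed
  have "X < \<infinity>" using order.strict_trans1[OF key[of 1 1] ennreal_less_top] by simp
  then obtain x where x: "X = ennreal x" "0 \<le> x" by (cases X rule: ennreal_cases) auto
  have xle: "x \<le> K * g^2"
  proof -
    define k where "k d = K * ((1+d) * g + d^2 + d)^2" for d
    have "(k \<longlongrightarrow> k 0) (at_right 0)" unfolding k_def by (intro tendsto_intros)
    moreover have "eventually (\<lambda>d. x \<le> k d) (at_right 0)"
    proof (rule eventually_at_rightI[of 0 1])
      fix d :: real assume "d \<in> {0<..<1}"
      then have d: "d > 0" by simp
      have "(1 + 1/d) * d^2 = d^2 + d" using d by (simp add: power2_eq_square field_simps)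
      then have "ennreal x \<le> ennreal (k d)" using key[OF d, of "d^2"] d x(1) unfolding k_def
        by (simp add: add.assoc)
      moreover have "0 \<le> k d" unfolding k_def using K by simp
      ultimately show "x \<le> k d" using ennreal_le_iff by blast
    qed simp
    ultimately have "x \<le> k 0" by (rule tendsto_lowerbound) simp
    then show ?thesis unfolding k_def by simp
  qed
  have pw4: "norm (\<phi> y) powr 4 = (norm (\<phi> y))^4" for y by simp
  have pw2: "norm (\<Psi> y) powr 2 = (norm (\<Psi> y))^2" for y by simp
  have int: "integrable M (\<lambda>x. norm (\<phi> x) powr 4)"
    unfolding pw4 integrable_iff_bounded using \<open>X < \<infinity>\<close> by (simp add: X_def)
  have i1: "(\<integral>y. norm (\<phi> y) powr 4 \<partial>M) = x"
    unfolding pw4 using x by (subst integral_eq_nn_integral) (auto simp: X_def)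
  have i2: "(\<integral>y. norm (\<Psi> y) powr 2 \<partial>M) = g"
    unfolding pw2 using g by (subst integral_eq_nn_integral) (auto simp: Gs_def)
  show ?thesis using int i1 i2 xle by simp
qed



lemma nsq: fixes x :: "'a::real_normed_vector^'n" shows "(norm x)^2 = (\<Sum>i\<in>UNIV. (norm (x$i))^2)"
  by (simp add: norm_vec_def L2_set_def sum_nonneg)

definition dep :: "real \<Rightarrow> real^3^3 \<Rightarrow> real^3^3" where
  "dep e A = (\<chi> i j. if j = 3 then A $ i $ j / e else A $ i $ j)"

lemma Deps_dep: "Deps e G z = dep e (G z)"
  by (simp add: Deps_def dep_def)

lemma dep_diff: "dep e A - dep e B = dep e (A - B)"
  by (simp add: dep_def vec_eq_iff diff_divide_distrib)

lemma dep_cont: "continuous_on UNIV (dep e)"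
  unfolding dep_def
  apply (intro continuous_on_vec_lambda)
  subgoal for i j by (cases "j = 3") (simp_all only: if_True if_False divide_inverse, auto intro!: continuous_intros)
  done

lemma norm_dep: "(norm (dep e A))^2 = (\<Sum>i\<in>UNIV. (A$i$1)^2 + (A$i$2)^2 + (A$i$3)^2 / e^2)"
  by (simp add: nsq dep_def sum_3 power_divide)

lemma norm_mat: "(norm (A::real^3^3))^2 = (\<Sum>i\<in>UNIV. (A$i$1)^2 + (A$i$2)^2 + (A$i$3)^2)"
  by (simp add: nsq sum_3)

lemma norm_dep_le: assumes "e > 0" shows "(norm (dep e A))^2 \<le> max 1 (1/e^2) * (norm A)^2"
proof -
  have "(A$i$1)^2 + (A$i$2)^2 + (A$i$3)^2 / e^2 \<le> max 1 (1/e^2) * ((A$i$1)^2 + (A$i$2)^2 + (A$i$3)^2)" for i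
  proof -
    have "(A$i$3)^2 / e^2 = (1/e^2) * (A$i$3)^2" by simp
    also have "\<dots> \<le> max 1 (1/e^2) * (A$i$3)^2" by (intro mult_right_mono) auto
    finally have 3: "(A$i$3)^2 / e^2 \<le> max 1 (1/e^2) * (A$i$3)^2" .
    have 1: "(A$i$1)^2 \<le> max 1 (1/e^2) * (A$i$1)^2" and 2: "(A$i$2)^2 \<le> max 1 (1/e^2) * (A$i$2)^2"
      using mult_right_mono[of 1 "max 1 (1/e^2)"] by auto
    from 1 2 3 show ?thesis by (simp add: algebra_simps)
  qed
  then show ?thesis unfolding norm_dep[of e A] norm_mat[of A] sum_distrib_left by (intro sum_mono) auto
qed

lemma norm_dep_grad: "(norm (dep e (grad3 f x)))^2 = (norm (pd 1 f x))^2 + (norm (pd 2 f x))^2 + (norm (pd 3 f x))^2 / e^2"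
  unfolding norm_dep by (simp add: grad3_def nsq sum_3 add_divide_distrib power_divide algebra_simps)

lemma grad3_cont: assumes "\<forall>j. continuous_on UNIV (pd j f)" shows "continuous_on UNIV (grad3 f)"
  unfolding grad3_def by (intro continuous_intros assms[rule_format])

lemma pd_zero:
  assumes "open S" "\<forall>y\<in>S. f y = 0" "x \<in> S"
  shows "pd j f x = 0"
proof -
  have "((\<lambda>_. 0) has_derivative (\<lambda>_. 0)) (at x)" by simp
  then have "(f has_derivative (\<lambda>_. 0)) (at x)"
    by (rule has_derivative_transform_within_open[OF _ assms(1,3)]) (use assms(2) in auto)
  then show ?thesis unfolding pd_def using frechet_derivative_at by metis
qed

lemma int_U:
  fixes F :: "real^3 \<Rightarrow> ennreal"
  assumes "U \<in> sets lebesgue" "\<forall>x. x \<notin> U \<longrightarrow> F x = 0"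
  shows "(\<integral>\<^sup>+x. F x \<partial>lebesgue_on U) = (\<integral>\<^sup>+x. F x \<partial>lborel)"
proof -
  have "(\<integral>\<^sup>+x. F x \<partial>lebesgue_on U) = (\<integral>\<^sup>+x. F x * indicator U x \<partial>lebesgue)"
    using assms(1) by (simp add: nn_integral_restrict_space)
  also have "\<dots> = (\<integral>\<^sup>+x. F x \<partial>lebesgue)"
    using assms(2) by (intro nn_integral_cong) (auto simp: indicator_def)
  also have "\<dots> = (\<integral>\<^sup>+x. F x \<partial>lborel)" by (rule nn_integral_completion)
  finally show ?thesis .
qed



lemma approx_bound:
  fixes U :: "(real^3) set" and \<phi> :: "real^3 \<Rightarrow> real^3"
  assumes Uo: "open U" and Ub: "bounded U" and supp: "\<forall>x\<in>U. 0 < x$3 \<and> x$3 < L" and L: "L > 0"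
    and hh: "h10 U \<phi> G" and e: "e > 0"
  shows "integrable (lebesgue_on U) (\<lambda>x. norm (\<phi> x) powr 4) \<and>
         (\<integral>x. norm (\<phi> x) powr 4 \<partial>lebesgue_on U) \<le> (8 * L * e^2) * (\<integral>x. norm (Deps e G x) powr 2 \<partial>lebesgue_on U)^2"
proof -
  have Ulm: "U \<in> lmeasurable" using lmeasurable_open[OF Ub Uo] .
  then have Ul: "U \<in> sets lebesgue" by (simp add: fmeasurable_def)
  have fm: "finite_measure (lebesgue_on U)" using finite_measure_lebesgue_on[OF Ulm] .
  obtain f where fC: "\<And>n. C1c U (f n)"
    and fa: "(\<lambda>n. \<integral>\<^sup>+x\<in>U. ennreal ((norm (f n x - \<phi> x))\<^sup>2) \<partial>lebesgue) \<longlonglongrightarrow> 0"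
    and fb: "(\<lambda>n. \<integral>\<^sup>+x\<in>U. ennreal ((norm (grad3 (f n) x - G x))\<^sup>2) \<partial>lebesgue) \<longlonglongrightarrow> 0"
    and \<phi>m: "\<phi> \<in> borel_measurable (lebesgue_on U)" and Gm: "G \<in> borel_measurable (lebesgue_on U)"
    using hh unfolding h10_def by blast
  have diff: "\<forall>x. f n differentiable (at x)" and cont: "\<forall>j. continuous_on UNIV (pd j (f n))" for n
    using fC[of n] unfolding C1c_def by auto
  obtain Kn where Kn: "\<And>n. compact (Kn n)" "\<And>n. Kn n \<subseteq> U" "\<And>n x. x \<notin> Kn n \<Longrightarrow> f n x = 0"
    using fC unfolding C1c_def by metis
  have fc: "continuous_on UNIV (f n)" for n
    using diff[of n] by (meson differentiable_at_imp_differentiable_on differentiable_imp_continuous_on)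
  have pdz: "pd j (f n) x = 0" if "x \<notin> Kn n" for j n x
    by (rule pd_zero[of "- Kn n"]) (use Kn that in \<open>auto intro: compact_imp_closed\<close>)
  have rsp: "(\<integral>\<^sup>+x. F x \<partial>lebesgue_on U) = (\<integral>\<^sup>+x\<in>U. F x \<partial>lebesgue)" for F :: "real^3 \<Rightarrow> ennreal"
    using Ul by (simp add: nn_integral_restrict_space)
  define V where "V n x = dep e (grad3 (f n) x)" for n x
  define \<Psi> where "\<Psi> x = dep e (G x)" for x
  have Vc: "continuous_on UNIV (V n)" for n
    unfolding V_def by (rule continuous_on_compose2[OF dep_cont grad3_cont[OF cont]]) auto
  have um: "f n \<in> borel_measurable (lebesgue_on U)" for n
    by (rule continuous_imp_measurable_on_sets_lebesgue[OF continuous_on_subset[OF fc] Ul]) auto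
  have Vm: "V n \<in> borel_measurable (lebesgue_on U)" for n
    by (rule continuous_imp_measurable_on_sets_lebesgue[OF continuous_on_subset[OF Vc] Ul]) auto
  have \<Psi>m: "\<Psi> \<in> borel_measurable (lebesgue_on U)"
    unfolding \<Psi>_def using measurable_compose[OF Gm borel_measurable_continuous_onI[OF dep_cont]] by (simp add: o_def)
  have gm: "grad3 (f n) \<in> borel_measurable (lebesgue_on U)" for n
    by (rule continuous_imp_measurable_on_sets_lebesgue[OF continuous_on_subset[OF grad3_cont[OF cont]] Ul]) auto
  note [measurable] = gm Gm \<phi>m um Vm \<Psi>m
  have a: "(\<lambda>n. \<integral>\<^sup>+x. ennreal ((norm (f n x - \<phi> x))\<^sup>2) \<partial>lebesgue_on U) \<longlonglongrightarrow> 0"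
    unfolding rsp by (rule fa)
  have b: "(\<lambda>n. \<integral>\<^sup>+x. ennreal ((norm (V n x - \<Psi> x))\<^sup>2) \<partial>lebesgue_on U) \<longlonglongrightarrow> 0"
  proof (rule tendsto_sandwich[OF _ _ tendsto_const])
    show "\<forall>\<^sub>F n in sequentially. 0 \<le> (\<integral>\<^sup>+x. ennreal ((norm (V n x - \<Psi> x))\<^sup>2) \<partial>lebesgue_on U)" by simp
    have "(\<lambda>n. ennreal (max 1 (1/e^2)) * (\<integral>\<^sup>+x\<in>U. ennreal ((norm (grad3 (f n) x - G x))\<^sup>2) \<partial>lebesgue)) \<longlonglongrightarrow> ennreal (max 1 (1/e^2)) * 0"
      by (rule ennreal_tendsto_cmult[OF _ fb]) simp
    then show "(\<lambda>n. ennreal (max 1 (1/e^2)) * (\<integral>\<^sup>+x. ennreal ((norm (grad3 (f n) x - G x))\<^sup>2) \<partial>lebesgue_on U)) \<longlonglongrightarrow> 0"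
      unfolding rsp by simp
    show "\<forall>\<^sub>F n in sequentially. (\<integral>\<^sup>+x. ennreal ((norm (V n x - \<Psi> x))\<^sup>2) \<partial>lebesgue_on U) \<le>
        ennreal (max 1 (1/e^2)) * (\<integral>\<^sup>+x. ennreal ((norm (grad3 (f n) x - G x))\<^sup>2) \<partial>lebesgue_on U)"
    proof (intro always_eventually allI)
      fix n
      have "(\<integral>\<^sup>+x. ennreal ((norm (V n x - \<Psi> x))\<^sup>2) \<partial>lebesgue_on U) \<le>
          (\<integral>\<^sup>+x. ennreal (max 1 (1/e^2)) * ennreal ((norm (grad3 (f n) x - G x))\<^sup>2) \<partial>lebesgue_on U)"
      proof (intro nn_integral_mono)
        fix x
        have "(norm (V n x - \<Psi> x))\<^sup>2 \<le> max 1 (1/e^2) * (norm (grad3 (f n) x - G x))\<^sup>2"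
          unfolding V_def \<Psi>_def dep_diff using norm_dep_le[OF e] .
        then show "ennreal ((norm (V n x - \<Psi> x))\<^sup>2) \<le> ennreal (max 1 (1/e^2)) * ennreal ((norm (grad3 (f n) x - G x))\<^sup>2)"
          by (simp add: ennreal_mult[symmetric] ennreal_leI del: ennreal_mult)
      qed
      also have "\<dots> = ennreal (max 1 (1/e^2)) * (\<integral>\<^sup>+x. ennreal ((norm (grad3 (f n) x - G x))\<^sup>2) \<partial>lebesgue_on U)"
        by (rule nn_integral_cmult) (use Gm gm[of n] in \<open>measurable\<close>)
      finally show "(\<integral>\<^sup>+x. ennreal ((norm (V n x - \<Psi> x))\<^sup>2) \<partial>lebesgue_on U) \<le>
        ennreal (max 1 (1/e^2)) * (\<integral>\<^sup>+x. ennreal ((norm (grad3 (f n) x - G x))\<^sup>2) \<partial>lebesgue_on U)" .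
    qed
  qed
  have zV: "V n x = 0" if "x \<notin> Kn n" for n x
    using that by (simp add: V_def grad3_def dep_def pdz vec_eq_iff)
  have pdm[measurable]: "pd j (f n) \<in> borel_measurable borel" for j n
    using cont borel_measurable_continuous_onI by blast
  have fin: "(\<integral>\<^sup>+x. ennreal ((norm (V n x))\<^sup>2) \<partial>lebesgue_on U) < \<infinity>" for n
  proof -
    have "(\<integral>\<^sup>+x. ennreal ((norm (V n x))\<^sup>2) \<partial>lebesgue_on U) = (\<integral>\<^sup>+x. ennreal ((norm (V n x))\<^sup>2) \<partial>lborel)"
    proof (rule int_U[OF Ul], intro allI impI)
      fix x assume "x \<notin> U"
      then have "x \<notin> Kn n" using Kn(2) by blast
      then show "ennreal ((norm (V n x))\<^sup>2) = 0" using zV by simp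
    qed
    also have "\<dots> < \<infinity>"
      by (rule fin_int[OF _ Kn(1)[of n]]) (use zV in \<open>auto intro!: continuous_intros Vc\<close>)
    finally show ?thesis .
  qed
  have bd: "(\<integral>\<^sup>+x. ennreal ((norm (f n x))^4) \<partial>lebesgue_on U) \<le> ennreal (8*L*e^2) * (\<integral>\<^sup>+x. ennreal ((norm (V n x))\<^sup>2) \<partial>lebesgue_on U)^2" for n
  proof -
    define Ej where "Ej j = (\<integral>\<^sup>+x. ennreal ((norm (pd j (f n) x))\<^sup>2) \<partial>lborel)" for j
    have core': "(\<integral>\<^sup>+x. ennreal ((norm (f n x))^4) \<partial>lborel) \<le> 8 * ennreal L * Ej 3 * (Ej 1 + Ej 2)"
      unfolding Ej_def
    proof (rule core[OF diff cont Kn(1)[of n] _ _ L])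
      show "\<forall>x. x \<notin> Kn n \<longrightarrow> f n x = 0" using Kn(3) by blast
      show "\<forall>x. f n x \<noteq> 0 \<longrightarrow> 0 < x$3 \<and> x$3 < L"
        using Kn(2,3) supp by blast
    qed
    have l4: "(\<integral>\<^sup>+x. ennreal ((norm (f n x))^4) \<partial>lebesgue_on U) = (\<integral>\<^sup>+x. ennreal ((norm (f n x))^4) \<partial>lborel)"
    proof (rule int_U[OF Ul], intro allI impI)
      fix x assume "x \<notin> U"
      then have "x \<notin> Kn n" using Kn(2) by blast
      then show "ennreal ((norm (f n x))^4) = 0" using Kn(3) by simp
    qed
    define D where "D = Ej 1 + Ej 2 + ennreal (1/e^2) * Ej 3"
    have lD: "(\<integral>\<^sup>+x. ennreal ((norm (V n x))\<^sup>2) \<partial>lebesgue_on U) = D"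
    proof -
      have "(\<integral>\<^sup>+x. ennreal ((norm (V n x))\<^sup>2) \<partial>lebesgue_on U) = (\<integral>\<^sup>+x. ennreal ((norm (V n x))\<^sup>2) \<partial>lborel)"
      proof (rule int_U[OF Ul], intro allI impI)
        fix x assume "x \<notin> U"
        then have "x \<notin> Kn n" using Kn(2) by blast
        then show "ennreal ((norm (V n x))\<^sup>2) = 0" using zV by simp
      qed
      also have "\<dots> = (\<integral>\<^sup>+x. ennreal ((norm (pd 1 (f n) x))\<^sup>2) + ennreal ((norm (pd 2 (f n) x))\<^sup>2) + ennreal (1/e^2) * ennreal ((norm (pd 3 (f n) x))\<^sup>2) \<partial>lborel)"
        unfolding V_def norm_dep_grad
      proof (intro nn_integral_cong)
        fix x
        let ?a = "(norm (pd 1 (f n) x))\<^sup>2" and ?b = "(norm (pd 2 (f n) x))\<^sup>2" and ?c = "(norm (pd 3 (f n) x))\<^sup>2"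
        have "ennreal (?a + ?b + ?c / e^2) = ennreal (?a + ?b) + ennreal (?c / e^2)"
          by (rule ennreal_plus) auto
        also have "ennreal (?a + ?b) = ennreal ?a + ennreal ?b" by (rule ennreal_plus) auto
        also have "ennreal (?c / e^2) = ennreal (1/e^2) * ennreal ?c"
          by (simp add: ennreal_mult[symmetric])
        finally show "ennreal (?a + ?b + ?c / e^2) = ennreal ?a + ennreal ?b + ennreal (1/e^2) * ennreal ?c" .
      qed
      also have "\<dots> = D" unfolding D_def Ej_def
        by (simp add: nn_integral_add nn_integral_cmult)
      finally show ?thesis .
    qed
    have e3: "Ej 3 = ennreal (e^2) * (ennreal (1/e^2) * Ej 3)"
      using e by (simp add: mult.assoc[symmetric] ennreal_mult[symmetric] del: ennreal_mult)
    have "ennreal (1/e^2) * Ej 3 \<le> D" unfolding D_def by (simp add: add_increasing)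
    then have E3: "Ej 3 \<le> ennreal (e^2) * D" by (subst e3) (intro mult_left_mono, auto)
    have E12: "Ej 1 + Ej 2 \<le> D" unfolding D_def by simp
    have "(\<integral>\<^sup>+x. ennreal ((norm (f n x))^4) \<partial>lebesgue_on U) \<le> 8 * ennreal L * Ej 3 * (Ej 1 + Ej 2)"
      using l4 core' by simp
    also have "\<dots> \<le> 8 * ennreal L * (ennreal (e^2) * D) * D"
      by (intro mult_mono E3 E12) auto
    also have "\<dots> = 8 * ennreal L * ennreal (e^2) * D^2"
      by (simp add: power2_eq_square ac_simps)
    also have "8 * ennreal L * ennreal (e^2) = ennreal (8*L*e^2)"
      using L by (simp add: ennreal_mult)
    finally have "(\<integral>\<^sup>+x. ennreal ((norm (f n x))^4) \<partial>lebesgue_on U) \<le> ennreal (8*L*e^2) * D^2" .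
    then show ?thesis unfolding lD .
  qed
  have "integrable (lebesgue_on U) (\<lambda>x. norm (\<phi> x) powr 4) \<and>
     (\<integral>x. norm (\<phi> x) powr 4 \<partial>lebesgue_on U) \<le> (8*L*e^2) * (\<integral>x. norm (\<Psi> x) powr 2 \<partial>lebesgue_on U)^2"
    by (rule lim_arg[OF fm um \<phi>m Vm \<Psi>m a b bd fin]) (use L in simp)
  then show ?thesis unfolding \<Psi>_def Deps_dep[symmetric] .
qed


lemma thin_props:
  assumes om: "open \<omega>" and bo: "bounded \<omega>" and hc: "continuous_on \<omega> h" and hM: "\<forall>x\<in>\<omega>. h x \<le> M"
    and c: "c > 0"
  shows "open (thin_dom \<omega> h c)" "bounded (thin_dom \<omega> h c)" "\<forall>x\<in>thin_dom \<omega> h c. 0 < x$3 \<and> x$3 < c * M"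
proof -
  have pc: "continuous_on UNIV proj12"
    unfolding proj12_def
    apply (intro continuous_on_vec_lambda)
    subgoal for i by (cases "i = 1") (simp_all add: continuous_on_component continuous_on_id)
    done
  define A where "A = proj12 -` \<omega>"
  have Ao: "open A" unfolding A_def by (rule open_vimage[OF om pc])
  define q where "q x = min (x$3) (c * h (proj12 x) - x$3)" for x
  have qc: "continuous_on A q"
    unfolding q_def
    by (intro continuous_intros continuous_on_compose2[OF hc] continuous_on_subset[OF pc]) (auto simp: A_def)
  have eq: "thin_dom \<omega> h c = A \<inter> q -` {0<..}"
    by (auto simp: thin_dom_def A_def q_def)
  show "open (thin_dom \<omega> h c)" unfolding eq by (rule continuous_open_preimage[OF qc Ao]) simp
  show sp: "\<forall>x\<in>thin_dom \<omega> h c. 0 < x$3 \<and> x$3 < c * M"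
  proof
    fix x assume x: "x \<in> thin_dom \<omega> h c"
    then have "x$3 < c * h (proj12 x)" "proj12 x \<in> \<omega>" "0 < x$3" by (auto simp: thin_dom_def)
    moreover have "c * h (proj12 x) \<le> c * M" using hM c \<open>proj12 x \<in> \<omega>\<close> by (simp add: mult_left_mono)
    ultimately show "0 < x$3 \<and> x$3 < c * M" by linarith
  qed
  obtain R where R: "\<And>y. y \<in> \<omega> \<Longrightarrow> norm y \<le> R" using bo bounded_iff by blast
  show "bounded (thin_dom \<omega> h c)"
    unfolding bounded_iff
  proof (intro exI ballI)
    fix x assume x: "x \<in> thin_dom \<omega> h c"
    then have p: "proj12 x \<in> \<omega>" by (auto simp: thin_dom_def)
    have 1: "\<bar>x$1\<bar> \<le> R" using component_le_norm_cart[of "proj12 x" 1] R[OF p] by (simp add: proj12_def)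
    have 2: "\<bar>x$2\<bar> \<le> R" using component_le_norm_cart[of "proj12 x" 2] R[OF p] by (simp add: proj12_def)
    have 3: "\<bar>x$3\<bar> \<le> c * M" using sp x by auto
    show "norm x \<le> R + R + c * M"
      using norm_le_l1_cart[of x] 1 2 3 by (simp add: sum_3)
  qed
qed

lemma powr_alg:
  fixes A B M t :: real
  assumes "0 \<le> A" "0 \<le> B" "M > 0" "t > 0" "A \<le> 8 * M * t * B^2"
  shows "A powr (1/4) \<le> (8*M) powr (1/4) * t powr (1/4) * B powr (1/2)"
proof -
  have "A powr (1/4) \<le> (8 * M * t * B^2) powr (1/4)" by (rule powr_mono2) (use assms in auto)
  also have "\<dots> = (8*M) powr (1/4) * t powr (1/4) * (B^2) powr (1/4)" by (simp add: powr_mult)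
  also have "(B^2) powr (1/4) = B powr (1/2)"
  proof -
    have "(B^2) powr (1/4) = (B powr 2) powr (1/4)" using assms(2) by simp
    also have "\<dots> = B powr (1/2)" by (simp add: powr_powr)
    finally show ?thesis .
  qed
  finally show ?thesis .
qed

theorem mainTheorem1:
  fixes \<omega> :: "(real^2) set" and h :: "real^2 \<Rightarrow> real"
  assumes "smooth_bounded_domain \<omega>" and "connected \<omega>"
    and "\<forall>x\<in>\<omega>. h x > 0" and "bounded (h ` \<omega>)" and "C1_on h \<omega>"
  shows "\<exists>C>0. \<forall>\<epsilon>>0. \<forall>\<phi> G. h10 (thin_dom \<omega> h \<epsilon>) \<phi> G \<longrightarrow>
           (in_Lp 4 (thin_dom \<omega> h \<epsilon>) \<phi> \<and>
            lp_norm 4 (thin_dom \<omega> h \<epsilon>) \<phi> \<le> C * \<epsilon> powr (1/4) * lp_norm 2 (thin_dom \<omega> h \<epsilon>) G) \<and>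
           (\<forall>Gt. h10 (thin_dom \<omega> h 1) (rescale \<epsilon> \<phi>) Gt \<longrightarrow>
              in_Lp 4 (thin_dom \<omega> h 1) (rescale \<epsilon> \<phi>) \<and>
              lp_norm 4 (thin_dom \<omega> h 1) (rescale \<epsilon> \<phi>)
                \<le> C * \<epsilon> powr (1/2) * lp_norm 2 (thin_dom \<omega> h 1) (Deps \<epsilon> Gt))"
proof -
  have om: "open \<omega>" using conjunct1[OF assms(1)[unfolded smooth_bounded_domain_def]] .
  have bo: "bounded \<omega>" using conjunct1[OF conjunct2[OF assms(1)[unfolded smooth_bounded_domain_def]]] .
  have hc: "continuous_on \<omega> h"
  proof (rule continuous_at_imp_continuous_on, rule ballI)
    fix x assume "x \<in> \<omega>"
    then have "h differentiable (at x)" using assms(5) unfolding C1_on_def by blast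
    then show "isCont h x" by (rule differentiable_imp_continuous_within)
  qed
  obtain M0 where M0: "\<And>x. x \<in> \<omega> \<Longrightarrow> norm (h x) \<le> M0"
    using assms(4) unfolding bounded_iff by auto
  define M where "M = max M0 1"
  have Mp: "M > 0" unfolding M_def by simp
  have hM: "\<forall>x\<in>\<omega>. h x \<le> M"
  proof
    fix x assume "x \<in> \<omega>"
    then have "\<bar>h x\<bar> \<le> M0" using M0 by simp
    then show "h x \<le> M" unfolding M_def by linarith
  qed
  define C where "C = (8*M) powr (1/4)"
  have Cp: "C > 0" unfolding C_def using Mp by simp
  have D1: "Deps 1 G = G" for G by (simp add: Deps_def fun_eq_iff vec_eq_iff)
  show ?thesis
  proof (intro exI[of _ C] conjI Cp allI impI)
    fix \<epsilon> :: real and \<phi> G assume ep: "\<epsilon> > 0" and hh: "h10 (thin_dom \<omega> h \<epsilon>) \<phi> G"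
    note tp = thin_props[OF om bo hc hM ep]
    have ab: "integrable (lebesgue_on (thin_dom \<omega> h \<epsilon>)) (\<lambda>x. norm (\<phi> x) powr 4) \<and>
         (\<integral>x. norm (\<phi> x) powr 4 \<partial>lebesgue_on (thin_dom \<omega> h \<epsilon>)) \<le> (8 * (\<epsilon> * M) * 1^2) * (\<integral>x. norm (Deps 1 G x) powr 2 \<partial>lebesgue_on (thin_dom \<omega> h \<epsilon>))^2"
      by (rule approx_bound[OF tp(1,2,3) _ hh]) (use ep Mp in auto)
    show "in_Lp 4 (thin_dom \<omega> h \<epsilon>) \<phi>"
      unfolding in_Lp_def using conjunct1[OF hh[unfolded h10_def]] conjunct1[OF ab] by (rule conjI)
    show "lp_norm 4 (thin_dom \<omega> h \<epsilon>) \<phi> \<le> C * \<epsilon> powr (1/4) * lp_norm 2 (thin_dom \<omega> h \<epsilon>) G"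
    proof -
      let ?A = "\<integral>x. norm (\<phi> x) powr 4 \<partial>lebesgue_on (thin_dom \<omega> h \<epsilon>)"
      let ?B = "\<integral>x. norm (G x) powr 2 \<partial>lebesgue_on (thin_dom \<omega> h \<epsilon>)"
      have A0: "0 \<le> ?A" by (intro integral_nonneg_AE AE_I2) simp
      have B0: "0 \<le> ?B" by (intro integral_nonneg_AE AE_I2) simp
      have "8 * (\<epsilon> * M) * 1^2 = 8 * M * \<epsilon>" by simp
      then have le: "?A \<le> 8 * M * \<epsilon> * ?B^2" using ab unfolding D1 by (simp add: mult_ac)
      show ?thesis unfolding lp_norm_def C_def by (rule powr_alg[OF A0 B0 Mp ep le])
    qed
  next
    fix \<epsilon> :: real and \<phi> G Gt assume ep: "\<epsilon> > 0" and hh: "h10 (thin_dom \<omega> h 1) (rescale \<epsilon> \<phi>) Gt"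
    have one: "(1::real) > 0" by simp
    note tp = thin_props[OF om bo hc hM one]
    have ab: "integrable (lebesgue_on (thin_dom \<omega> h 1)) (\<lambda>x. norm (rescale \<epsilon> \<phi> x) powr 4) \<and>
         (\<integral>x. norm (rescale \<epsilon> \<phi> x) powr 4 \<partial>lebesgue_on (thin_dom \<omega> h 1)) \<le> (8 * (1 * M) * \<epsilon>^2) * (\<integral>x. norm (Deps \<epsilon> Gt x) powr 2 \<partial>lebesgue_on (thin_dom \<omega> h 1))^2"
      by (rule approx_bound[OF tp(1,2,3) _ hh]) (use ep Mp in auto)
    show "in_Lp 4 (thin_dom \<omega> h 1) (rescale \<epsilon> \<phi>)"
      unfolding in_Lp_def using conjunct1[OF hh[unfolded h10_def]] conjunct1[OF ab] by (rule conjI)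
    have e2: "(\<epsilon>^2) powr (1/4) = \<epsilon> powr (1/2)"
    proof -
      have "(\<epsilon>^2) powr (1/4) = (\<epsilon> powr 2) powr (1/4)" using ep by simp
      also have "\<dots> = \<epsilon> powr (1/2)" by (simp add: powr_powr)
      finally show ?thesis .
    qed
    have "lp_norm 4 (thin_dom \<omega> h 1) (rescale \<epsilon> \<phi>) \<le> C * (\<epsilon>^2) powr (1/4) * lp_norm 2 (thin_dom \<omega> h 1) (Deps \<epsilon> Gt)"
    proof -
      let ?A = "\<integral>x. norm (rescale \<epsilon> \<phi> x) powr 4 \<partial>lebesgue_on (thin_dom \<omega> h 1)"
      let ?B = "\<integral>x. norm (Deps \<epsilon> Gt x) powr 2 \<partial>lebesgue_on (thin_dom \<omega> h 1)"
      have A0: "0 \<le> ?A" by (intro integral_nonneg_AE AE_I2) simp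
      have B0: "0 \<le> ?B" by (intro integral_nonneg_AE AE_I2) simp
      have "8 * (1 * M) * \<epsilon>^2 = 8 * M * \<epsilon>^2" by simp
      then have le: "?A \<le> 8 * M * \<epsilon>^2 * ?B^2" using ab by (simp add: mult_ac)
      have e2p: "\<epsilon>^2 > 0" using ep by simp
      show ?thesis unfolding lp_norm_def C_def by (rule powr_alg[OF A0 B0 Mp e2p le])
    qed
    then show "lp_norm 4 (thin_dom \<omega> h 1) (rescale \<epsilon> \<phi>) \<le> C * \<epsilon> powr (1/2) * lp_norm 2 (thin_dom \<omega> h 1) (Deps \<epsilon> Gt)"
      unfolding e2 .
  qed
qed


end
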